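(* Let $F : \mathsf{Set} \to \mathsf{Set}$ be a finitary functor which preserves pullbacks of monomorphisms. Let $\rho$ be an uncountable regular ordinal. Then $F$ preserves $\rho^{\mathrm{op}}$-indexed limits: for every functor $X : \rho^{\mathrm{op}} \to \mathsf{Set}$ (i.e. a family of sets $(X_\alpha)_{\alpha<\rho}$ with restriction maps $X_\alpha \to X_\beta$ for $\beta \le \alpha$, compatible with composition), the canonical comparison map $F(\lim_{\alpha<\rho} X_\alpha) \to \lim_{\alpha<\rho} F(X_\alpha)$ is a bijection.
   Context: A functor $F:\mathsf{Set}\to\mathsf{Set}$ is finitary if it preserves directed colimits. $F$ preserves pullbacks of monomorphisms if for every pullback square $A \to B$, $A \to C$, $B \rightarrowtail D$, $C \to D$ in $\mathsf{Set}$ in which $B \to D$ is a monomorphism, the image of the square under $F$ is again a pullback square. An ordinal $\rho$ is regular if it is a limit ordinal equal to its own cofinality (every subset of $\rho$ of cardinality smaller than $\rho$ is bounded in $\rho$); here $\rho$ is moreover assumed uncountable. The ordinal $\rho$ is viewed as a poset category, and $\rho^{\mathrm{op}}$ is its opposite. *)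

theory Defs
  imports Main "HOL-Library.FuncSet" "HOL-Library.Countable_Set"
begin

text \<open>A functor F from sets to sets: objects are subsets of the universe type 'a,
  morphisms A -> B are functions f with f in A -> B (only the values on A matter).\<close>

definition set_functor ::
  "('a set \<Rightarrow> 'b set) \<Rightarrow> ('a set \<Rightarrow> 'a set \<Rightarrow> ('a \<Rightarrow> 'a) \<Rightarrow> 'b \<Rightarrow> 'b) \<Rightarrow> bool" where
  "set_functor Fo Fm \<longleftrightarrow>
     (\<forall>A B f. f \<in> A \<rightarrow> B \<longrightarrow> Fm A B f \<in> Fo A \<rightarrow> Fo B) \<and>
     (\<forall>A B f g. f \<in> A \<rightarrow> B \<and> (\<forall>x\<in>A. f x = g x) \<longrightarrow> (\<forall>y\<in>Fo A. Fm A B f y = Fm A B g y)) \<and>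
     (\<forall>A. \<forall>y\<in>Fo A. Fm A A id y = y) \<and>
     (\<forall>A B C f g. f \<in> A \<rightarrow> B \<and> g \<in> B \<rightarrow> C \<longrightarrow>
        (\<forall>y\<in>Fo A. Fm A C (g \<circ> f) y = Fm B C g (Fm A B f y)))"

definition is_pullback ::
  "'a set \<Rightarrow> 'a set \<Rightarrow> 'a set \<Rightarrow> 'a set \<Rightarrow> ('a \<Rightarrow> 'a) \<Rightarrow> ('a \<Rightarrow> 'a) \<Rightarrow> ('a \<Rightarrow> 'a) \<Rightarrow> ('a \<Rightarrow> 'a) \<Rightarrow> bool" where
  "is_pullback A B C D p q m n \<longleftrightarrow>
     p \<in> A \<rightarrow> B \<and> q \<in> A \<rightarrow> C \<and> m \<in> B \<rightarrow> D \<and> n \<in> C \<rightarrow> D \<and>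
     (\<forall>a\<in>A. m (p a) = n (q a)) \<and>
     (\<forall>b\<in>B. \<forall>c\<in>C. m b = n c \<longrightarrow> (\<exists>!a. a \<in> A \<and> p a = b \<and> q a = c))"

definition preserves_mono_pullbacks ::
  "('a set \<Rightarrow> 'b set) \<Rightarrow> ('a set \<Rightarrow> 'a set \<Rightarrow> ('a \<Rightarrow> 'a) \<Rightarrow> 'b \<Rightarrow> 'b) \<Rightarrow> bool" where
  "preserves_mono_pullbacks Fo Fm \<longleftrightarrow>
     (\<forall>A B C D p q m n. is_pullback A B C D p q m n \<and> inj_on m B \<longrightarrow>
        is_pullback (Fo A) (Fo B) (Fo C) (Fo D) (Fm A B p) (Fm A C q) (Fm B D m) (Fm C D n))"

definition directed_poset :: "'i set \<Rightarrow> ('i \<Rightarrow> 'i \<Rightarrow> bool) \<Rightarrow> bool" where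
  "directed_poset I le \<longleftrightarrow>
     I \<noteq> {} \<and>
     (\<forall>i\<in>I. le i i) \<and>
     (\<forall>i\<in>I. \<forall>j\<in>I. le i j \<and> le j i \<longrightarrow> i = j) \<and>
     (\<forall>i\<in>I. \<forall>j\<in>I. \<forall>k\<in>I. le i j \<and> le j k \<longrightarrow> le i k) \<and>
     (\<forall>i\<in>I. \<forall>j\<in>I. \<exists>k\<in>I. le i k \<and> le j k)"

definition diagram ::
  "'i set \<Rightarrow> ('i \<Rightarrow> 'i \<Rightarrow> bool) \<Rightarrow> ('i \<Rightarrow> 'c set) \<Rightarrow> ('i \<Rightarrow> 'i \<Rightarrow> 'c \<Rightarrow> 'c) \<Rightarrow> bool" where
  "diagram I le D Dm \<longleftrightarrow>
     (\<forall>i\<in>I. \<forall>j\<in>I. le i j \<longrightarrow> Dm i j \<in> D i \<rightarrow> D j) \<and>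
     (\<forall>i\<in>I. \<forall>x\<in>D i. Dm i i x = x) \<and>
     (\<forall>i\<in>I. \<forall>j\<in>I. \<forall>k\<in>I. le i j \<and> le j k \<longrightarrow> (\<forall>x\<in>D i. Dm j k (Dm i j x) = Dm i k x))"

definition cocone ::
  "'i set \<Rightarrow> ('i \<Rightarrow> 'i \<Rightarrow> bool) \<Rightarrow> ('i \<Rightarrow> 'c set) \<Rightarrow> ('i \<Rightarrow> 'i \<Rightarrow> 'c \<Rightarrow> 'c)
     \<Rightarrow> 'c set \<Rightarrow> ('i \<Rightarrow> 'c \<Rightarrow> 'c) \<Rightarrow> bool" where
  "cocone I le D Dm C \<iota> \<longleftrightarrow>
     (\<forall>i\<in>I. \<iota> i \<in> D i \<rightarrow> C) \<and>
     (\<forall>i\<in>I. \<forall>j\<in>I. le i j \<longrightarrow> (\<forall>x\<in>D i. \<iota> j (Dm i j x) = \<iota> i x))"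

definition is_colimit ::
  "'i set \<Rightarrow> ('i \<Rightarrow> 'i \<Rightarrow> bool) \<Rightarrow> ('i \<Rightarrow> 'c set) \<Rightarrow> ('i \<Rightarrow> 'i \<Rightarrow> 'c \<Rightarrow> 'c)
     \<Rightarrow> 'c set \<Rightarrow> ('i \<Rightarrow> 'c \<Rightarrow> 'c) \<Rightarrow> bool" where
  "is_colimit I le D Dm C \<iota> \<longleftrightarrow>
     cocone I le D Dm C \<iota> \<and>
     (\<forall>T \<tau>. cocone I le D Dm T \<tau> \<longrightarrow>
        (\<exists>u. u \<in> C \<rightarrow> T \<and> (\<forall>i\<in>I. \<forall>x\<in>D i. u (\<iota> i x) = \<tau> i x) \<and>
             (\<forall>v. v \<in> C \<rightarrow> T \<and> (\<forall>i\<in>I. \<forall>x\<in>D i. v (\<iota> i x) = \<tau> i x) \<longrightarrow>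
                  (\<forall>c\<in>C. v c = u c))))"

text \<open>F is finitary: it preserves (all) directed colimits. Index posets are taken with
  carrier a set of subsets of the universe (this includes the directed poset of finite
  subsets of any object).\<close>

definition finitary ::
  "('a set \<Rightarrow> 'b set) \<Rightarrow> ('a set \<Rightarrow> 'a set \<Rightarrow> ('a \<Rightarrow> 'a) \<Rightarrow> 'b \<Rightarrow> 'b) \<Rightarrow> bool" where
  "finitary Fo Fm \<longleftrightarrow>
     (\<forall>(I :: 'a set set) le (D :: 'a set \<Rightarrow> 'a set) Dm C \<iota>.
        directed_poset I le \<and> diagram I le D Dm \<and> is_colimit I le D Dm C \<iota> \<longrightarrow>
        is_colimit I le (\<lambda>i. Fo (D i)) (\<lambda>i j. Fm (D i) (D j) (Dm i j))
                   (Fo C) (\<lambda>i. Fm (D i) C (\<iota> i)))"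

text \<open>The ordinal rho is given as a well-order r (its carrier is Field r, the
  order is (a,b) in r meaning a \<le> b).\<close>

definition uncountable_regular_ordinal :: "'k rel \<Rightarrow> bool" where
  "uncountable_regular_ordinal r \<longleftrightarrow>
     Well_order r \<and>
     \<not> countable (Field r) \<and>
     (\<forall>a\<in>Field r. \<exists>b\<in>Field r. (a, b) \<in> r \<and> a \<noteq> b) \<and>
     (\<forall>K. K \<subseteq> Field r \<and> (card_of K, r) \<in> ordLess \<longrightarrow> (\<exists>b\<in>Field r. \<forall>k\<in>K. (k, b) \<in> r))"

definition op_diagram :: "'k rel \<Rightarrow> ('k \<Rightarrow> 'c set) \<Rightarrow> ('k \<Rightarrow> 'k \<Rightarrow> 'c \<Rightarrow> 'c) \<Rightarrow> bool" where
  "op_diagram r X R \<longleftrightarrow>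
     (\<forall>\<alpha> \<beta>. (\<beta>, \<alpha>) \<in> r \<longrightarrow> R \<alpha> \<beta> \<in> X \<alpha> \<rightarrow> X \<beta>) \<and>
     (\<forall>\<alpha>\<in>Field r. \<forall>x\<in>X \<alpha>. R \<alpha> \<alpha> x = x) \<and>
     (\<forall>\<alpha> \<beta> \<gamma>. (\<beta>, \<alpha>) \<in> r \<and> (\<gamma>, \<beta>) \<in> r \<longrightarrow> (\<forall>x\<in>X \<alpha>. R \<beta> \<gamma> (R \<alpha> \<beta> x) = R \<alpha> \<gamma> x))"

definition op_cone :: "'k rel \<Rightarrow> ('k \<Rightarrow> 'c set) \<Rightarrow> ('k \<Rightarrow> 'k \<Rightarrow> 'c \<Rightarrow> 'c)
     \<Rightarrow> 'c set \<Rightarrow> ('k \<Rightarrow> 'c \<Rightarrow> 'c) \<Rightarrow> bool" where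
  "op_cone r X R L \<pi> \<longleftrightarrow>
     (\<forall>\<alpha>\<in>Field r. \<pi> \<alpha> \<in> L \<rightarrow> X \<alpha>) \<and>
     (\<forall>\<alpha> \<beta>. (\<beta>, \<alpha>) \<in> r \<longrightarrow> (\<forall>x\<in>L. R \<alpha> \<beta> (\<pi> \<alpha> x) = \<pi> \<beta> x))"

definition is_op_limit :: "'k rel \<Rightarrow> ('k \<Rightarrow> 'c set) \<Rightarrow> ('k \<Rightarrow> 'k \<Rightarrow> 'c \<Rightarrow> 'c)
     \<Rightarrow> 'c set \<Rightarrow> ('k \<Rightarrow> 'c \<Rightarrow> 'c) \<Rightarrow> bool" where
  "is_op_limit r X R L \<pi> \<longleftrightarrow>
     op_cone r X R L \<pi> \<and>
     (\<forall>T \<tau>. op_cone r X R T \<tau> \<longrightarrow>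
        (\<exists>u. u \<in> T \<rightarrow> L \<and> (\<forall>\<alpha>\<in>Field r. \<forall>t\<in>T. \<pi> \<alpha> (u t) = \<tau> \<alpha> t) \<and>
             (\<forall>v. v \<in> T \<rightarrow> L \<and> (\<forall>\<alpha>\<in>Field r. \<forall>t\<in>T. \<pi> \<alpha> (v t) = \<tau> \<alpha> t) \<longrightarrow>
                  (\<forall>t\<in>T. v t = u t))))"

definition op_threads :: "'k rel \<Rightarrow> ('k \<Rightarrow> 'c set) \<Rightarrow> ('k \<Rightarrow> 'k \<Rightarrow> 'c \<Rightarrow> 'c) \<Rightarrow> ('k \<Rightarrow> 'c) set" where
  "op_threads r X R =
     {t. t \<in> extensional (Field r) \<and> (\<forall>\<alpha>\<in>Field r. t \<alpha> \<in> X \<alpha>) \<and>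
         (\<forall>\<alpha> \<beta>. (\<beta>, \<alpha>) \<in> r \<longrightarrow> R \<alpha> \<beta> (t \<alpha>) = t \<beta>)}"

end

theory Submission
  imports Defs "HOL-Library.Countable_Set_Type"
begin

locale sfun =
  fixes Fo :: "'a set \<Rightarrow> 'b set"
    and Fm :: "'a set \<Rightarrow> 'a set \<Rightarrow> ('a \<Rightarrow> 'a) \<Rightarrow> 'b \<Rightarrow> 'b"
  assumes sf: "set_functor Fo Fm"
    and pb: "preserves_mono_pullbacks Fo Fm"
    and fin: "finitary Fo Fm"
begin

lemma sf1: "\<forall>A B f. f \<in> A \<rightarrow> B \<longrightarrow> Fm A B f \<in> Fo A \<rightarrow> Fo B"
  and sf2: "\<forall>A B f g. f \<in> A \<rightarrow> B \<and> (\<forall>x\<in>A. f x = g x) \<longrightarrow> (\<forall>y\<in>Fo A. Fm A B f y = Fm A B g y)"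
  and sf3: "\<forall>A. \<forall>y\<in>Fo A. Fm A A id y = y"
  and sf4: "\<forall>A B C f g. f \<in> A \<rightarrow> B \<and> g \<in> B \<rightarrow> C \<longrightarrow>
        (\<forall>y\<in>Fo A. Fm A C (g \<circ> f) y = Fm B C g (Fm A B f y))"
  using sf unfolding set_functor_def by simp_all

lemma F_fun: assumes "f \<in> A \<rightarrow> B" "y \<in> Fo A" shows "Fm A B f y \<in> Fo B"
  using funcset_mem[OF sf1[rule_format, OF assms(1)] assms(2)] .

lemma F_cong: "f \<in> A \<rightarrow> B \<Longrightarrow> (\<And>x. x \<in> A \<Longrightarrow> f x = g x) \<Longrightarrow> y \<in> Fo A \<Longrightarrow> Fm A B f y = Fm A B g y"
  using sf2[rule_format, of f A B g y] by blast

lemma F_id: "y \<in> Fo A \<Longrightarrow> Fm A A id y = y"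
  using sf3 by blast

lemma F_comp: "f \<in> A \<rightarrow> B \<Longrightarrow> g \<in> B \<rightarrow> C \<Longrightarrow> y \<in> Fo A \<Longrightarrow> Fm A C (g \<circ> f) y = Fm B C g (Fm A B f y)"
  using sf4[rule_format, of f A B g C y] by blast

lemma F_comp': "f \<in> A \<rightarrow> B \<Longrightarrow> g \<in> B \<rightarrow> C \<Longrightarrow> (\<And>x. x \<in> A \<Longrightarrow> h x = g (f x)) \<Longrightarrow> y \<in> Fo A
   \<Longrightarrow> Fm A C h y = Fm B C g (Fm A B f y)"
proof -
  assume a: "f \<in> A \<rightarrow> B" "g \<in> B \<rightarrow> C" "\<And>x. x \<in> A \<Longrightarrow> h x = g (f x)" "y \<in> Fo A"
  have "Fm A C (g \<circ> f) y = Fm A C h y"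
    by (rule F_cong) (use a in auto)
  then show ?thesis using F_comp[OF a(1,2,4)] by simp
qed

lemma F_inj: assumes "m \<in> B \<rightarrow> D" "inj_on m B" shows "inj_on (Fm B D m) (Fo B)"
proof -
  have "is_pullback B B B D id id m m"
    unfolding is_pullback_def using assms by (auto dest: inj_onD)
  with pb assms have P: "is_pullback (Fo B) (Fo B) (Fo B) (Fo D) (Fm B B id) (Fm B B id) (Fm B D m) (Fm B D m)"
    unfolding preserves_mono_pullbacks_def by blast
  show ?thesis
  proof (rule inj_onI)
    fix y y' assume y: "y \<in> Fo B" "y' \<in> Fo B" "Fm B D m y = Fm B D m y'"
    then obtain a where "a \<in> Fo B" "Fm B B id a = y" "Fm B B id a = y'"
      using P unfolding is_pullback_def by blast
    then show "y = y'" using F_id by simp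
  qed
qed

definition supp :: "'a set \<Rightarrow> 'a set \<Rightarrow> 'b \<Rightarrow> bool" where
  "supp X A t \<longleftrightarrow> A \<subseteq> X \<and> t \<in> Fm A X id ` Fo A"

lemma supp_inter: assumes "supp X A t" "supp X B t" shows "supp X (A \<inter> B) t"
proof -
  from assms obtain y z where yz: "y \<in> Fo A" "z \<in> Fo B" "t = Fm A X id y" "t = Fm B X id z"
    and AB: "A \<subseteq> X" "B \<subseteq> X"
    unfolding supp_def by blast
  have "is_pullback (A \<inter> B) A B X id id id id"
    unfolding is_pullback_def using AB by auto
  with pb have P: "is_pullback (Fo (A \<inter> B)) (Fo A) (Fo B) (Fo X) (Fm (A \<inter> B) A id) (Fm (A \<inter> B) B id) (Fm A X id) (Fm B X id)"
    unfolding preserves_mono_pullbacks_def by auto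
  then obtain a where a: "a \<in> Fo (A \<inter> B)" "Fm (A \<inter> B) A id a = y"
    using yz unfolding is_pullback_def by metis
  have "Fm (A \<inter> B) X id a = Fm A X id (Fm (A \<inter> B) A id a)"
    by (rule F_comp') (use a AB in auto)
  then have "t = Fm (A \<inter> B) X id a" using a yz by simp
  then show ?thesis using a AB unfolding supp_def by blast
qed

lemma supp_mono: assumes "supp X A t" "A \<subseteq> B" "B \<subseteq> X" shows "supp X B t"
proof -
  from assms obtain y where y: "y \<in> Fo A" "t = Fm A X id y" unfolding supp_def by blast
  have "Fm A X id y = Fm B X id (Fm A B id y)"
    by (rule F_comp') (use y assms in auto)
  moreover have "Fm A B id y \<in> Fo B" by (rule F_fun) (use y assms in auto)
  ultimately show ?thesis using y assms unfolding supp_def by auto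
qed

lemma supp_image: assumes "supp X A t" "f \<in> X \<rightarrow> Y" "t \<in> Fo X" shows "supp Y (f ` A) (Fm X Y f t)"
proof -
  from assms obtain y where y: "y \<in> Fo A" "t = Fm A X id y" and AX: "A \<subseteq> X" unfolding supp_def by blast
  have idAX: "id \<in> A \<rightarrow> X" using AX by auto
  have "Fm X Y f t = Fm A Y f y"
    using F_comp'[OF idAX assms(2), of f y, symmetric] y by simp
  also have "\<dots> = Fm (f ` A) Y id (Fm A (f ` A) f y)"
    by (rule F_comp') (use y AX assms in auto)
  finally show ?thesis
    using F_fun[of f A "f ` A" y] y AX assms unfolding supp_def by auto
qed

lemma finite_supp_exists: assumes t: "t \<in> Fo X" shows "\<exists>A. finite A \<and> supp X A t"
proof -
  define I where "I = {A. finite A \<and> A \<subseteq> X}"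
  have dp: "directed_poset I (\<subseteq>)"
    unfolding directed_poset_def
  proof (intro conjI ballI impI)
    show "I \<noteq> {}" unfolding I_def by blast
  next
    fix i show "i \<subseteq> i" by (rule subset_refl)
  next
    fix i j assume "i \<subseteq> j \<and> j \<subseteq> i" then show "i = j" by (simp add: subset_antisym)
  next
    fix i j k :: "'a set" assume "i \<subseteq> j \<and> j \<subseteq> k" then show "i \<subseteq> k" by (meson subset_trans)
  next
    fix i j assume "i \<in> I" "j \<in> I"
    then have "i \<union> j \<in> I" unfolding I_def by simp
    then show "\<exists>k\<in>I. i \<subseteq> k \<and> j \<subseteq> k" by blast
  qed
  have dg: "diagram I (\<subseteq>) (\<lambda>i. i) (\<lambda>i j. id)"
    unfolding diagram_def by (simp add: Pi_iff subset_iff)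
  have co: "is_colimit I (\<subseteq>) (\<lambda>i. i) (\<lambda>i j. id) X (\<lambda>i. id)"
    unfolding is_colimit_def
  proof (intro conjI allI impI)
    show "cocone I (\<subseteq>) (\<lambda>i. i) (\<lambda>i j. id) X (\<lambda>i. id)"
      unfolding cocone_def I_def by (simp add: Pi_iff subset_iff)
    fix T \<tau> assume c: "cocone I (\<subseteq>) (\<lambda>i. i) (\<lambda>i j. id) T \<tau>"
    have sI: "x \<in> X \<Longrightarrow> {x} \<in> I" for x unfolding I_def by auto
    show "\<exists>u. u \<in> X \<rightarrow> T \<and> (\<forall>i\<in>I. \<forall>x\<in>i. u (id x) = \<tau> i x) \<and>
         (\<forall>v. v \<in> X \<rightarrow> T \<and> (\<forall>i\<in>I. \<forall>x\<in>i. v (id x) = \<tau> i x) \<longrightarrow> (\<forall>c\<in>X. v c = u c))"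
    proof -
      have c1: "\<forall>i\<in>I. \<tau> i \<in> i \<rightarrow> T" and
        c2: "\<forall>i\<in>I. \<forall>j\<in>I. i \<subseteq> j \<longrightarrow> (\<forall>x\<in>i. \<tau> j (id x) = \<tau> i x)"
        using c unfolding cocone_def by (rule conjunct1, rule conjunct2)
      have P1: "(\<lambda>x. \<tau> {x} x) \<in> X \<rightarrow> T"
      proof
        fix x assume "x \<in> X"
        have "\<tau> {x} \<in> {x} \<rightarrow> T" using bspec[OF c1 sI[OF \<open>x \<in> X\<close>]] .
        then show "\<tau> {x} x \<in> T" by (rule funcset_mem) simp
      qed
      have P2: "\<forall>i\<in>I. \<forall>x\<in>i. \<tau> {id x} (id x) = \<tau> i x"
      proof (intro ballI)
        fix i x assume i: "i \<in> I" "x \<in> i"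
        then have "x \<in> X" unfolding I_def by blast
        then have "{x} \<in> I" by (rule sI)
        then have "\<tau> i (id x) = \<tau> {x} x" using c2 i by blast
        then show "\<tau> {id x} (id x) = \<tau> i x" by simp
      qed
      have P3: "\<forall>c\<in>X. v c = \<tau> {c} c" if v: "\<forall>i\<in>I. \<forall>x\<in>i. v (id x) = \<tau> i x" for v
      proof
        fix c assume "c \<in> X"
        then have "{c} \<in> I" by (rule sI)
        then have "v (id c) = \<tau> {c} c" using v by blast
        then show "v c = \<tau> {c} c" by simp
      qed
      show ?thesis
        apply (rule exI[of _ "\<lambda>x. \<tau> {x} x"])
        using P1 P2 P3 by blast
    qed
  qed
  have Fco: "is_colimit I (\<subseteq>) (\<lambda>i. Fo i) (\<lambda>i j. Fm i j id) (Fo X) (\<lambda>i. Fm i X id)"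
    using fin[unfolded finitary_def, rule_format, of I "(\<subseteq>)" "\<lambda>i. i" "\<lambda>i j. id" X "\<lambda>i. id"] dp dg co
    by simp
  define U where "U = (\<Union>i\<in>I. Fm i X id ` Fo i)"
  have cU: "cocone I (\<subseteq>) (\<lambda>i. Fo i) (\<lambda>i j. Fm i j id) U (\<lambda>i. Fm i X id)"
    unfolding cocone_def
  proof (intro conjI ballI allI impI)
    fix i assume "i \<in> I"
    then show "Fm i X id \<in> Fo i \<rightarrow> U" unfolding U_def by blast
  next
    fix i j x assume "i \<in> I" "j \<in> I" "i \<subseteq> j" "x \<in> Fo i"
    moreover have "id \<in> i \<rightarrow> j" "id \<in> j \<rightarrow> X" using calculation unfolding I_def by auto
    ultimately show "Fm j X id (Fm i j id x) = Fm i X id x"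
      using F_comp'[of id i j id X id x] by simp
  qed
  have univ: "\<forall>T \<tau>. cocone I (\<subseteq>) (\<lambda>i. Fo i) (\<lambda>i j. Fm i j id) T \<tau> \<longrightarrow>
        (\<exists>u. u \<in> Fo X \<rightarrow> T \<and> (\<forall>i\<in>I. \<forall>x\<in>Fo i. u (Fm i X id x) = \<tau> i x) \<and>
             (\<forall>v. v \<in> Fo X \<rightarrow> T \<and> (\<forall>i\<in>I. \<forall>x\<in>Fo i. v (Fm i X id x) = \<tau> i x) \<longrightarrow>
                  (\<forall>c\<in>Fo X. v c = u c)))"
    and cX: "cocone I (\<subseteq>) (\<lambda>i. Fo i) (\<lambda>i j. Fm i j id) (Fo X) (\<lambda>i. Fm i X id)"
    using Fco unfolding is_colimit_def by simp_all
  obtain u where u0: "u \<in> Fo X \<rightarrow> U \<and> (\<forall>i\<in>I. \<forall>x\<in>Fo i. u (Fm i X id x) = Fm i X id x) \<and>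
             (\<forall>v. v \<in> Fo X \<rightarrow> U \<and> (\<forall>i\<in>I. \<forall>x\<in>Fo i. v (Fm i X id x) = Fm i X id x) \<longrightarrow>
                  (\<forall>c\<in>Fo X. v c = u c))"
    using univ[rule_format, OF cU] by (rule exE)
  then have u1: "u \<in> Fo X \<rightarrow> U" and u2: "\<forall>i\<in>I. \<forall>x\<in>Fo i. u (Fm i X id x) = Fm i X id x"
    by simp_all
  obtain u' where u'0: "u' \<in> Fo X \<rightarrow> Fo X \<and> (\<forall>i\<in>I. \<forall>x\<in>Fo i. u' (Fm i X id x) = Fm i X id x) \<and>
             (\<forall>v. v \<in> Fo X \<rightarrow> Fo X \<and> (\<forall>i\<in>I. \<forall>x\<in>Fo i. v (Fm i X id x) = Fm i X id x) \<longrightarrow>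
                  (\<forall>c\<in>Fo X. v c = u' c))"
    using univ[rule_format, OF cX] by (rule exE)
  then have u': "\<And>v. v \<in> Fo X \<rightarrow> Fo X \<Longrightarrow> (\<forall>i\<in>I. \<forall>x\<in>Fo i. v (Fm i X id x) = Fm i X id x) \<Longrightarrow> (\<forall>c\<in>Fo X. v c = u' c)"
    by simp
  have UX: "U \<subseteq> Fo X"
  proof
    fix c assume "c \<in> U"
    then obtain i x where ix: "i \<in> I" "x \<in> Fo i" "c = Fm i X id x" unfolding U_def by blast
    have "id \<in> i \<rightarrow> X" using ix unfolding I_def by auto
    from F_fun[OF this ix(2)] show "c \<in> Fo X" using ix(3) by simp
  qed
  have "id \<in> Fo X \<rightarrow> Fo X" by simp
  from u'[OF this] t have e1: "id t = u' t" by simp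
  have "u \<in> Fo X \<rightarrow> Fo X" using u1 UX by (simp add: Pi_iff subset_iff)
  from u'[OF this u2] t have e2: "u t = u' t" by simp
  have "u t \<in> U" using u1 t by (rule funcset_mem)
  then have "t \<in> U" using e1 e2 by simp
  then show ?thesis unfolding U_def I_def supp_def by blast
qed


lemma least_supp: assumes t: "t \<in> Fo X"
  shows "\<exists>S. finite S \<and> supp X S t \<and> (\<forall>B. supp X B t \<longrightarrow> S \<subseteq> B)"
proof -
  define P where "P n \<longleftrightarrow> (\<exists>A. finite A \<and> supp X A t \<and> card A = n)" for n
  obtain A0 where "finite A0" "supp X A0 t" using finite_supp_exists[OF t] by blast
  then have "P (card A0)" unfolding P_def by blast
  then have "P (LEAST n. P n)" by (rule LeastI)
  then obtain A where A: "finite A" "supp X A t" "card A = (LEAST n. P n)" unfolding P_def by blast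
  have "A \<subseteq> B" if B: "supp X B t" for B
  proof -
    have s: "supp X (A \<inter> B) t" using supp_inter[OF A(2) B] .
    have f: "finite (A \<inter> B)" using A(1) by simp
    have "P (card (A \<inter> B))" unfolding P_def using s f by blast
    then have "card A \<le> card (A \<inter> B)" unfolding A(3) by (rule Least_le)
    moreover have "card (A \<inter> B) \<le> card A" using A(1) by (simp add: card_mono)
    ultimately have "card (A \<inter> B) = card A" by simp
    then have "A \<inter> B = A" using card_subset_eq[OF A(1), of "A \<inter> B"] by simp
    then show ?thesis by blast
  qed
  then show ?thesis using A by blast
qed

end

locale setting = sfun Fo Fm
  for Fo :: "'a set \<Rightarrow> 'b set" and Fm :: "'a set \<Rightarrow> 'a set \<Rightarrow> ('a \<Rightarrow> 'a) \<Rightarrow> 'b \<Rightarrow> 'b" +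
  fixes r :: "'k rel" and X :: "'k \<Rightarrow> 'a set" and R :: "'k \<Rightarrow> 'k \<Rightarrow> 'a \<Rightarrow> 'a"
    and L :: "'a set" and \<pi> :: "'k \<Rightarrow> 'a \<Rightarrow> 'a"
  assumes reg: "uncountable_regular_ordinal r"
    and od: "op_diagram r X R"
    and lim: "is_op_limit r X R L \<pi>"
begin

unbundle cardinal_syntax

abbreviation "K \<equiv> Field r"

lemma WO: "Well_order r" using reg unfolding uncountable_regular_ordinal_def by simp

lemma Rtrans: "(a, b) \<in> r \<Longrightarrow> (b, c) \<in> r \<Longrightarrow> (a, c) \<in> r"
  using WO unfolding well_order_on_def linear_order_on_def partial_order_on_def preorder_on_def
  by (meson transD)

lemma Rrefl: "a \<in> K \<Longrightarrow> (a, a) \<in> r"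
  using WO unfolding well_order_on_def linear_order_on_def partial_order_on_def preorder_on_def
  by (meson refl_onD)

lemma Rtot: "a \<in> K \<Longrightarrow> b \<in> K \<Longrightarrow> (a, b) \<in> r \<or> (b, a) \<in> r"
  using WO Rrefl unfolding well_order_on_def linear_order_on_def total_on_def
  by metis

lemma RK1: "(a, b) \<in> r \<Longrightarrow> a \<in> K" by (rule FieldI1)
lemma RK2: "(a, b) \<in> r \<Longrightarrow> b \<in> K" by (rule FieldI2)

lemma K_uncountable: "\<not> countable K" using reg unfolding uncountable_regular_ordinal_def by simp

lemma K_ne: "K \<noteq> {}" using K_uncountable by auto

lemma countable_bound: assumes "countable G" "G \<subseteq> K" shows "\<exists>b\<in>K. \<forall>g\<in>G. (g, b) \<in> r"
proof -
  have reg4: "\<forall>G. G \<subseteq> K \<and> (card_of G, r) \<in> ordLess \<longrightarrow> (\<exists>b\<in>K. \<forall>k\<in>G. (k, b) \<in> r)"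
    using reg unfolding uncountable_regular_ordinal_def by blast
  have g: "|G| \<le>o |UNIV :: nat set|" using assms(1) countable_card_of_nat by blast
  have "\<not> |K| \<le>o |UNIV :: nat set|" using K_uncountable countable_card_of_nat by blast
  then have "|UNIV :: nat set| <o |K|"
    using not_ordLeq_iff_ordLess[OF card_of_Well_order card_of_Well_order] by blast
  then have "|G| <o |K|" using g ordLeq_ordLess_trans by blast
  moreover have "|K| \<le>o r" using card_of_least[OF WO] .
  ultimately have "|G| <o r" using ordLess_ordLeq_trans by blast
  then show ?thesis using reg4 assms(2) by blast
qed

lemma finite_bound: assumes "finite G" "G \<subseteq> K" shows "\<exists>b\<in>K. \<forall>g\<in>G. (g, b) \<in> r"
  using assms
proof (induction G rule: finite_induct)
  case empty then show ?case using K_ne by blast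
next
  case (insert a G)
  then obtain b where b: "b \<in> K" "\<forall>g\<in>G. (g, b) \<in> r" by blast
  have a: "a \<in> K" using insert.prems by blast
  show ?case
  proof (cases "(a, b) \<in> r")
    case True then show ?thesis using b by blast
  next
    case False
    then have "(b, a) \<in> r" using Rtot[OF a b(1)] by blast
    then show ?thesis using b a Rtrans Rrefl by blast
  qed
qed

lemma od1: "(\<beta>, \<alpha>) \<in> r \<Longrightarrow> R \<alpha> \<beta> \<in> X \<alpha> \<rightarrow> X \<beta>"
  using od unfolding op_diagram_def by blast
lemma od1': "(\<beta>, \<alpha>) \<in> r \<Longrightarrow> x \<in> X \<alpha> \<Longrightarrow> R \<alpha> \<beta> x \<in> X \<beta>"
  using od1 by (rule funcset_mem)
lemma od2: "\<alpha> \<in> K \<Longrightarrow> x \<in> X \<alpha> \<Longrightarrow> R \<alpha> \<alpha> x = x"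
  using od unfolding op_diagram_def by blast
lemma od3: "(\<beta>, \<alpha>) \<in> r \<Longrightarrow> (\<gamma>, \<beta>) \<in> r \<Longrightarrow> x \<in> X \<alpha> \<Longrightarrow> R \<beta> \<gamma> (R \<alpha> \<beta> x) = R \<alpha> \<gamma> x"
  using od unfolding op_diagram_def by blast

lemma cone: "op_cone r X R L \<pi>" using lim unfolding is_op_limit_def by (rule conjunct1)
lemma cone1: "\<alpha> \<in> K \<Longrightarrow> \<pi> \<alpha> \<in> L \<rightarrow> X \<alpha>"
  using cone unfolding op_cone_def by blast
lemma cone2: "(\<beta>, \<alpha>) \<in> r \<Longrightarrow> x \<in> L \<Longrightarrow> R \<alpha> \<beta> (\<pi> \<alpha> x) = \<pi> \<beta> x"
  using cone unfolding op_cone_def by blast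

lemma univL: "op_cone r X R T \<tau> \<Longrightarrow>
        (\<exists>u. u \<in> T \<rightarrow> L \<and> (\<forall>\<alpha>\<in>K. \<forall>t\<in>T. \<pi> \<alpha> (u t) = \<tau> \<alpha> t) \<and>
             (\<forall>v. v \<in> T \<rightarrow> L \<and> (\<forall>\<alpha>\<in>K. \<forall>t\<in>T. \<pi> \<alpha> (v t) = \<tau> \<alpha> t) \<longrightarrow>
                  (\<forall>t\<in>T. v t = u t)))"
  using lim unfolding is_op_limit_def by blast

lemma sep: assumes "x \<in> L" "x' \<in> L" "\<forall>\<alpha>\<in>K. \<pi> \<alpha> x = \<pi> \<alpha> x'" shows "x = x'"
proof -
  have "op_cone r X R {x} \<pi>" using cone assms(1) unfolding op_cone_def by (simp add: Pi_iff)
  from univL[OF this] obtain u where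
    u: "\<forall>v. v \<in> {x} \<rightarrow> L \<and> (\<forall>\<alpha>\<in>K. \<forall>t\<in>{x}. \<pi> \<alpha> (v t) = \<pi> \<alpha> t) \<longrightarrow> (\<forall>t\<in>{x}. v t = u t)"
    by blast
  have "(\<lambda>_. x) \<in> {x} \<rightarrow> L \<and> (\<forall>\<alpha>\<in>K. \<forall>t\<in>{x}. \<pi> \<alpha> ((\<lambda>_. x) t) = \<pi> \<alpha> t)"
    using assms by simp
  then have 1: "x = u x" using u by blast
  have "(\<lambda>_. x') \<in> {x} \<rightarrow> L \<and> (\<forall>\<alpha>\<in>K. \<forall>t\<in>{x}. \<pi> \<alpha> ((\<lambda>_. x') t) = \<pi> \<alpha> t)"
    using assms by simp
  then have 2: "x' = u x" using u by blast
  show ?thesis using 1 2 by simp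
qed

lemma exL: assumes "\<forall>\<alpha>\<in>K. \<theta> \<alpha> \<in> X \<alpha>" "\<forall>\<alpha> \<beta>. (\<beta>, \<alpha>) \<in> r \<longrightarrow> R \<alpha> \<beta> (\<theta> \<alpha>) = \<theta> \<beta>"
  shows "\<exists>x\<in>L. \<forall>\<alpha>\<in>K. \<pi> \<alpha> x = \<theta> \<alpha>"
proof -
  define c :: 'a where "c = undefined"
  have "op_cone r X R {c} (\<lambda>\<alpha> _. \<theta> \<alpha>)" using assms unfolding op_cone_def by (simp add: Pi_iff)
  from univL[OF this] obtain u where u: "u \<in> {c} \<rightarrow> L" "\<forall>\<alpha>\<in>K. \<forall>t\<in>{c}. \<pi> \<alpha> (u t) = \<theta> \<alpha>"
    by blast
  then show ?thesis by (intro bexI[of _ "u c"]) auto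
qed


lemma phi_compat: assumes "y \<in> Fo L" "(\<beta>, \<alpha>) \<in> r"
  shows "Fm (X \<alpha>) (X \<beta>) (R \<alpha> \<beta>) (Fm L (X \<alpha>) (\<pi> \<alpha>) y) = Fm L (X \<beta>) (\<pi> \<beta>) y"
proof -
  have "Fm L (X \<beta>) (\<pi> \<beta>) y = Fm (X \<alpha>) (X \<beta>) (R \<alpha> \<beta>) (Fm L (X \<alpha>) (\<pi> \<alpha>) y)"
  proof (rule F_comp')
    show "\<pi> \<alpha> \<in> L \<rightarrow> X \<alpha>" using cone1[OF RK2[OF assms(2)]] .
    show "R \<alpha> \<beta> \<in> X \<alpha> \<rightarrow> X \<beta>" using od1[OF assms(2)] .
    show "\<And>x. x \<in> L \<Longrightarrow> \<pi> \<beta> x = R \<alpha> \<beta> (\<pi> \<alpha> x)" using cone2[OF assms(2)] by simp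
    show "y \<in> Fo L" by fact
  qed
  then show ?thesis by simp
qed

lemma phi_thread: assumes y: "y \<in> Fo L"
  shows "(\<lambda>\<alpha>\<in>K. Fm L (X \<alpha>) (\<pi> \<alpha>) y) \<in> op_threads r (\<lambda>\<alpha>. Fo (X \<alpha>)) (\<lambda>\<alpha> \<beta>. Fm (X \<alpha>) (X \<beta>) (R \<alpha> \<beta>))"
  unfolding op_threads_def
proof (intro CollectI conjI allI impI ballI)
  show "(\<lambda>\<alpha>\<in>K. Fm L (X \<alpha>) (\<pi> \<alpha>) y) \<in> extensional K" by simp
next
  fix \<alpha> assume a: "\<alpha> \<in> K"
  then show "(\<lambda>\<alpha>\<in>K. Fm L (X \<alpha>) (\<pi> \<alpha>) y) \<alpha> \<in> Fo (X \<alpha>)"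
    using F_fun[OF cone1[OF a] y] by simp
next
  fix \<alpha> \<beta> assume ba: "(\<beta>, \<alpha>) \<in> r"
  then show "Fm (X \<alpha>) (X \<beta>) (R \<alpha> \<beta>) ((\<lambda>\<alpha>\<in>K. Fm L (X \<alpha>) (\<pi> \<alpha>) y) \<alpha>) = (\<lambda>\<alpha>\<in>K. Fm L (X \<alpha>) (\<pi> \<alpha>) y) \<beta>"
    using phi_compat[OF y ba] RK1[OF ba] RK2[OF ba] by simp
qed

lemma inj_finite: assumes N: "finite N" "N \<subseteq> L" shows "\<exists>\<alpha>\<in>K. inj_on (\<pi> \<alpha>) N"
proof -
  define P where "P = {p \<in> N \<times> N. fst p \<noteq> snd p}"
  define f where "f p = (SOME \<alpha>. \<alpha> \<in> K \<and> \<pi> \<alpha> (fst p) \<noteq> \<pi> \<alpha> (snd p))" for p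
  have fp: "f p \<in> K \<and> \<pi> (f p) (fst p) \<noteq> \<pi> (f p) (snd p)" if p: "p \<in> P" for p
  proof -
    have "fst p \<in> L" "snd p \<in> L" "fst p \<noteq> snd p" using p N unfolding P_def by auto
    then have "\<exists>\<alpha>. \<alpha> \<in> K \<and> \<pi> \<alpha> (fst p) \<noteq> \<pi> \<alpha> (snd p)" using sep by blast
    then show ?thesis unfolding f_def by (rule someI_ex)
  qed
  have "finite P" unfolding P_def using N(1) by simp
  then have "finite (f ` P)" by simp
  moreover have "f ` P \<subseteq> K" using fp by blast
  ultimately obtain b where b: "b \<in> K" "\<forall>g\<in>f ` P. (g, b) \<in> r" using finite_bound by blast
  have "inj_on (\<pi> b) N"
  proof (rule inj_onI, rule ccontr)
    fix x x' assume xx: "x \<in> N" "x' \<in> N" "\<pi> b x = \<pi> b x'" "x \<noteq> x'"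
    then have p: "(x, x') \<in> P" unfolding P_def by simp
    then have fb: "(f (x, x'), b) \<in> r" using b by blast
    have xL: "x \<in> L" "x' \<in> L" using xx(1,2) N(2) by auto
    have "\<pi> (f (x, x')) x = R b (f (x, x')) (\<pi> b x)" using cone2[OF fb xL(1)] by simp
    also have "\<dots> = R b (f (x, x')) (\<pi> b x')" using xx by simp
    also have "\<dots> = \<pi> (f (x, x')) x'" using cone2[OF fb xL(2)] by simp
    finally show False using fp[OF p] by simp
  qed
  then show ?thesis using b by blast
qed

lemma phi_inj: "inj_on (\<lambda>y. \<lambda>\<alpha>\<in>K. Fm L (X \<alpha>) (\<pi> \<alpha>) y) (Fo L)"
proof (rule inj_onI)
  fix y y' assume y: "y \<in> Fo L" "y' \<in> Fo L"
    and eq: "(\<lambda>\<alpha>\<in>K. Fm L (X \<alpha>) (\<pi> \<alpha>) y) = (\<lambda>\<alpha>\<in>K. Fm L (X \<alpha>) (\<pi> \<alpha>) y')"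
  obtain A where A: "finite A" "supp L A y" using finite_supp_exists[OF y(1)] by blast
  obtain A' where A': "finite A'" "supp L A' y'" using finite_supp_exists[OF y(2)] by blast
  define N where "N = A \<union> A'"
  have NL: "N \<subseteq> L" using A(2) A'(2) unfolding N_def supp_def by blast
  have "supp L N y" using supp_mono[OF A(2) _ NL] unfolding N_def by blast
  then obtain z where z: "z \<in> Fo N" "y = Fm N L id z" unfolding supp_def by blast
  have "supp L N y'" using supp_mono[OF A'(2) _ NL] unfolding N_def by blast
  then obtain z' where z': "z' \<in> Fo N" "y' = Fm N L id z'" unfolding supp_def by blast
  have "finite N" unfolding N_def using A(1) A'(1) by simp
  then obtain \<alpha> where a: "\<alpha> \<in> K" "inj_on (\<pi> \<alpha>) N" using inj_finite NL by blast
  have piN: "\<pi> \<alpha> \<in> N \<rightarrow> X \<alpha>" using cone1[OF a(1)] NL by (simp add: Pi_iff subset_iff)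
  have idN: "id \<in> N \<rightarrow> L" using NL by (simp add: Pi_iff subset_iff)
  have c: "Fm L (X \<alpha>) (\<pi> \<alpha>) (Fm N L id w) = Fm N (X \<alpha>) (\<pi> \<alpha>) w" if w: "w \<in> Fo N" for w
    using F_comp'[OF idN cone1[OF a(1)], of "\<pi> \<alpha>" w] w by simp
  have "Fm L (X \<alpha>) (\<pi> \<alpha>) y = Fm L (X \<alpha>) (\<pi> \<alpha>) y'"
    using fun_cong[OF eq, of \<alpha>] a(1) by simp
  then have "Fm N (X \<alpha>) (\<pi> \<alpha>) z = Fm N (X \<alpha>) (\<pi> \<alpha>) z'" using c z z' by simp
  then have "z = z'" using F_inj[OF piN a(2)] z(1) z'(1) by (simp add: inj_on_def)
  then show "y = y'" using z z' by simp
qed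


lemma phi_surj: assumes t: "t \<in> op_threads r (\<lambda>\<alpha>. Fo (X \<alpha>)) (\<lambda>\<alpha> \<beta>. Fm (X \<alpha>) (X \<beta>) (R \<alpha> \<beta>))"
  shows "\<exists>y\<in>Fo L. (\<lambda>\<alpha>\<in>K. Fm L (X \<alpha>) (\<pi> \<alpha>) y) = t"
proof -
  have tE: "t \<in> extensional K" using t unfolding op_threads_def by simp
  have tX: "\<And>\<alpha>. \<alpha> \<in> K \<Longrightarrow> t \<alpha> \<in> Fo (X \<alpha>)" using t unfolding op_threads_def by simp
  have tR: "\<And>\<alpha> \<beta>. (\<beta>, \<alpha>) \<in> r \<Longrightarrow> Fm (X \<alpha>) (X \<beta>) (R \<alpha> \<beta>) (t \<alpha>) = t \<beta>"
    using t unfolding op_threads_def by simp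
  define S where "S \<alpha> = (SOME S. finite S \<and> supp (X \<alpha>) S (t \<alpha>) \<and> (\<forall>B. supp (X \<alpha>) B (t \<alpha>) \<longrightarrow> S \<subseteq> B))" for \<alpha>
  have SP: "finite (S \<alpha>) \<and> supp (X \<alpha>) (S \<alpha>) (t \<alpha>) \<and> (\<forall>B. supp (X \<alpha>) B (t \<alpha>) \<longrightarrow> S \<alpha> \<subseteq> B)"
    if "\<alpha> \<in> K" for \<alpha>
    unfolding S_def by (rule someI_ex) (rule least_supp[OF tX[OF that]])
  have Sfin: "\<And>\<alpha>. \<alpha> \<in> K \<Longrightarrow> finite (S \<alpha>)" using SP by blast
  have Ssupp: "\<And>\<alpha>. \<alpha> \<in> K \<Longrightarrow> supp (X \<alpha>) (S \<alpha>) (t \<alpha>)" using SP by blast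
  have Sleast: "\<And>\<alpha> B. \<alpha> \<in> K \<Longrightarrow> supp (X \<alpha>) B (t \<alpha>) \<Longrightarrow> S \<alpha> \<subseteq> B" using SP by blast
  have SX: "\<And>\<alpha>. \<alpha> \<in> K \<Longrightarrow> S \<alpha> \<subseteq> X \<alpha>" using Ssupp unfolding supp_def by blast
  have Simg: "S \<beta> \<subseteq> R \<alpha> \<beta> ` S \<alpha>" if ba: "(\<beta>, \<alpha>) \<in> r" for \<alpha> \<beta>
  proof -
    have "supp (X \<beta>) (R \<alpha> \<beta> ` S \<alpha>) (Fm (X \<alpha>) (X \<beta>) (R \<alpha> \<beta>) (t \<alpha>))"
      using supp_image[OF Ssupp[OF RK2[OF ba]] od1[OF ba] tX[OF RK2[OF ba]]] .
    then have "supp (X \<beta>) (R \<alpha> \<beta> ` S \<alpha>) (t \<beta>)" using tR[OF ba] by simp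
    then show ?thesis using Sleast[OF RK1[OF ba]] by blast
  qed
  have Scard: "card (S \<beta>) \<le> card (S \<alpha>)" if ba: "(\<beta>, \<alpha>) \<in> r" for \<alpha> \<beta>
  proof -
    have f: "finite (R \<alpha> \<beta> ` S \<alpha>)" using Sfin[OF RK2[OF ba]] by simp
    have "card (S \<beta>) \<le> card (R \<alpha> \<beta> ` S \<alpha>)" using card_mono[OF f Simg[OF ba]] .
    also have "\<dots> \<le> card (S \<alpha>)" using card_image_le[OF Sfin[OF RK2[OF ba]]] .
    finally show ?thesis .
  qed
  have bounded: "\<exists>Mx. \<forall>\<alpha>\<in>K. card (S \<alpha>) \<le> Mx"
  proof (rule ccontr)
    assume "\<not> ?thesis"
    then have "\<forall>Mx. \<exists>\<alpha>. \<alpha> \<in> K \<and> Mx < card (S \<alpha>)" by (simp add: not_le Bex_def)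
    from choice[OF this] obtain g where g0: "\<forall>Mx. g Mx \<in> K \<and> Mx < card (S (g Mx))" by (rule exE)
    then have g: "\<And>Mx. g Mx \<in> K \<and> Mx < card (S (g Mx))" by simp
    have "countable (range g)" by simp
    moreover have "range g \<subseteq> K" using g by blast
    ultimately obtain b where b: "b \<in> K" "\<forall>x\<in>range g. (x, b) \<in> r" using countable_bound by blast
    have "(g (card (S b)), b) \<in> r" using b by blast
    then have "card (S (g (card (S b)))) \<le> card (S b)" by (rule Scard)
    with g[of "card (S b)"] show False by simp
  qed
  then obtain Mx where Mx: "\<forall>\<alpha>\<in>K. card (S \<alpha>) \<le> Mx" by blast
  define m where "m = Max ((\<lambda>\<alpha>. card (S \<alpha>)) ` K)"
  have fin: "finite ((\<lambda>\<alpha>. card (S \<alpha>)) ` K)"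
    by (rule finite_subset[of _ "{..Mx}"]) (use Mx in auto)
  have "m \<in> (\<lambda>\<alpha>. card (S \<alpha>)) ` K" unfolding m_def using fin K_ne by (intro Max_in) auto
  then obtain \<alpha>0 where a0: "\<alpha>0 \<in> K" "card (S \<alpha>0) = m" by blast
  have mmax: "\<And>\<alpha>. \<alpha> \<in> K \<Longrightarrow> card (S \<alpha>) \<le> m" unfolding m_def using fin by simp
  have a0r: "(\<alpha>0, \<alpha>0) \<in> r" using Rrefl[OF a0(1)] .
  have cardeq: "card (S \<alpha>) = m" if "(\<alpha>0, \<alpha>) \<in> r" for \<alpha>
    using Scard[OF that] mmax[OF RK2[OF that]] a0(2) by simp
  have E: "R \<alpha> \<beta> ` S \<alpha> = S \<beta> \<and> inj_on (R \<alpha> \<beta>) (S \<alpha>)" if ab: "(\<alpha>0, \<beta>) \<in> r" "(\<beta>, \<alpha>) \<in> r" for \<alpha> \<beta>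
  proof -
    have aK: "\<alpha> \<in> K" using RK2[OF ab(2)] .
    have a0a: "(\<alpha>0, \<alpha>) \<in> r" using Rtrans[OF ab] .
    have f: "finite (R \<alpha> \<beta> ` S \<alpha>)" using Sfin[OF aK] by simp
    have c1: "card (S \<beta>) \<le> card (R \<alpha> \<beta> ` S \<alpha>)" using card_mono[OF f Simg[OF ab(2)]] .
    have c2: "card (R \<alpha> \<beta> ` S \<alpha>) \<le> card (S \<alpha>)" using card_image_le[OF Sfin[OF aK]] .
    have c3: "card (S \<beta>) = card (S \<alpha>)" using cardeq[OF ab(1)] cardeq[OF a0a] by simp
    have "S \<beta> = R \<alpha> \<beta> ` S \<alpha>" using card_subset_eq[OF f Simg[OF ab(2)]] c1 c2 c3 by simp
    moreover have "inj_on (R \<alpha> \<beta>) (S \<alpha>)" using inj_on_iff_eq_card[OF Sfin[OF aK], of "R \<alpha> \<beta>"] c1 c2 c3 by linarith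
    ultimately show ?thesis by simp
  qed
  define \<theta> where "\<theta> s \<alpha> = (if (\<alpha>0, \<alpha>) \<in> r then (THE x. x \<in> S \<alpha> \<and> R \<alpha> \<alpha>0 x = s) else R \<alpha>0 \<alpha> s)" for s \<alpha>
  have th_up: "\<theta> s \<alpha> \<in> S \<alpha> \<and> R \<alpha> \<alpha>0 (\<theta> s \<alpha>) = s" if s: "s \<in> S \<alpha>0" and a: "(\<alpha>0, \<alpha>) \<in> r" for s \<alpha>
  proof -
    have E0: "R \<alpha> \<alpha>0 ` S \<alpha> = S \<alpha>0" "inj_on (R \<alpha> \<alpha>0) (S \<alpha>)" using E[OF a0r a] by simp_all
    have "\<exists>!x. x \<in> S \<alpha> \<and> R \<alpha> \<alpha>0 x = s"
    proof -
      have "s \<in> R \<alpha> \<alpha>0 ` S \<alpha>" using s E0(1) by simp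
      then obtain x where x0: "s = R \<alpha> \<alpha>0 x" "x \<in> S \<alpha>" by (rule imageE)
      then have "x \<in> S \<alpha>" "R \<alpha> \<alpha>0 x = s" by simp_all
      moreover have "x' = x" if "x' \<in> S \<alpha>" "R \<alpha> \<alpha>0 x' = s" for x'
        using inj_onD[OF E0(2), of x' x] that \<open>R \<alpha> \<alpha>0 x = s\<close> \<open>x \<in> S \<alpha>\<close> by simp
      ultimately show ?thesis by blast
    qed
    then have "(THE x. x \<in> S \<alpha> \<and> R \<alpha> \<alpha>0 x = s) \<in> S \<alpha> \<and> R \<alpha> \<alpha>0 (THE x. x \<in> S \<alpha> \<and> R \<alpha> \<alpha>0 x = s) = s"
      by (rule theI')
    then show ?thesis unfolding \<theta>_def using a by simp
  qed
  have th_uniq: "\<theta> s \<alpha> = x" if s: "s \<in> S \<alpha>0" and a: "(\<alpha>0, \<alpha>) \<in> r" and x: "x \<in> S \<alpha>" "R \<alpha> \<alpha>0 x = s" for s \<alpha> x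
  proof -
    have "inj_on (R \<alpha> \<alpha>0) (S \<alpha>)" using E[OF a0r a] by simp
    then show ?thesis using th_up[OF s a] x by (meson inj_onD)
  qed
  have S0X: "S \<alpha>0 \<subseteq> X \<alpha>0" using SX[OF a0(1)] .
  have notle: "(\<alpha>, \<alpha>0) \<in> r" if "\<alpha> \<in> K" "(\<alpha>0, \<alpha>) \<notin> r" for \<alpha>
    using Rtot[OF that(1) a0(1)] that(2) by blast
  have thX: "\<theta> s \<alpha> \<in> X \<alpha>" if s: "s \<in> S \<alpha>0" and a: "\<alpha> \<in> K" for s \<alpha>
  proof (cases "(\<alpha>0, \<alpha>) \<in> r")
    case True then show ?thesis using subsetD[OF SX[OF a]] th_up[OF s True] by simp
  next
    case False
    then have "\<theta> s \<alpha> = R \<alpha>0 \<alpha> s" unfolding \<theta>_def by simp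
    moreover have "s \<in> X \<alpha>0" using subsetD[OF S0X s] .
    ultimately show ?thesis using od1'[OF notle[OF a False]] by simp
  qed
  have thR: "R \<alpha> \<beta> (\<theta> s \<alpha>) = \<theta> s \<beta>" if s: "s \<in> S \<alpha>0" and ba: "(\<beta>, \<alpha>) \<in> r" for s \<alpha> \<beta>
  proof (cases "(\<alpha>0, \<beta>) \<in> r")
    case True
    have a0a: "(\<alpha>0, \<alpha>) \<in> r" using Rtrans[OF True ba] .
    define x where "x = \<theta> s \<alpha>"
    have x: "x \<in> S \<alpha>" "R \<alpha> \<alpha>0 x = s" using th_up[OF s a0a] unfolding x_def by simp_all
    have xX: "x \<in> X \<alpha>" using x(1) SX[OF RK2[OF ba]] by blast
    have "R \<alpha> \<beta> x \<in> R \<alpha> \<beta> ` S \<alpha>" using x(1) by (rule imageI)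
    then have "R \<alpha> \<beta> x \<in> S \<beta>" using E[OF True ba] by simp
    moreover have "R \<beta> \<alpha>0 (R \<alpha> \<beta> x) = s" using od3[OF ba True xX] x(2) by simp
    ultimately have "\<theta> s \<beta> = R \<alpha> \<beta> x" by (rule th_uniq[OF s True])
    then show ?thesis unfolding x_def by simp
  next
    case False
    have b0: "(\<beta>, \<alpha>0) \<in> r" using notle[OF RK1[OF ba] False] .
    have tb: "\<theta> s \<beta> = R \<alpha>0 \<beta> s" unfolding \<theta>_def using False by simp
    show ?thesis
    proof (cases "(\<alpha>0, \<alpha>) \<in> r")
      case True
      define x where "x = \<theta> s \<alpha>"
      have x: "x \<in> S \<alpha>" "R \<alpha> \<alpha>0 x = s" using th_up[OF s True] unfolding x_def by simp_all
      have xX: "x \<in> X \<alpha>" using x(1) SX[OF RK2[OF ba]] by blast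
      have "R \<alpha>0 \<beta> (R \<alpha> \<alpha>0 x) = R \<alpha> \<beta> x" using od3[OF True b0 xX] .
      then show ?thesis using tb x(2) unfolding x_def by simp
    next
      case False2: False
      have a0': "(\<alpha>, \<alpha>0) \<in> r" using notle[OF RK2[OF ba] False2] .
      have ta: "\<theta> s \<alpha> = R \<alpha>0 \<alpha> s" unfolding \<theta>_def using False2 by simp
      have "s \<in> X \<alpha>0" using s S0X by blast
      then have "R \<alpha> \<beta> (R \<alpha>0 \<alpha> s) = R \<alpha>0 \<beta> s" using od3[OF a0' ba] by simp
      then show ?thesis using ta tb by simp
    qed
  qed
  have th0: "\<theta> s \<alpha>0 = s" if s: "s \<in> S \<alpha>0" for s
  proof -
    have "R \<alpha>0 \<alpha>0 s = s" using od2[OF a0(1)] s S0X by blast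
    then show ?thesis using th_uniq[OF s a0r s] by simp
  qed
  define mm where "mm s = (SOME x. x \<in> L \<and> (\<forall>\<alpha>\<in>K. \<pi> \<alpha> x = \<theta> s \<alpha>))" for s
  have mmP: "mm s \<in> L \<and> (\<forall>\<alpha>\<in>K. \<pi> \<alpha> (mm s) = \<theta> s \<alpha>)" if s: "s \<in> S \<alpha>0" for s
  proof -
    have "\<exists>x\<in>L. \<forall>\<alpha>\<in>K. \<pi> \<alpha> x = \<theta> s \<alpha>"
      by (rule exL) (use thX[OF s] thR[OF s] in blast)+
    then have "\<exists>x. x \<in> L \<and> (\<forall>\<alpha>\<in>K. \<pi> \<alpha> x = \<theta> s \<alpha>)" by blast
    then show ?thesis unfolding mm_def by (rule someI_ex)
  qed
  obtain w where w: "w \<in> Fo (S \<alpha>0)" "t \<alpha>0 = Fm (S \<alpha>0) (X \<alpha>0) id w"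
    using Ssupp[OF a0(1)] unfolding supp_def by blast
  define M where "M = mm ` S \<alpha>0"
  have mmM: "mm \<in> S \<alpha>0 \<rightarrow> M" unfolding M_def by (rule funcsetI, erule imageI)
  have MsubL: "M \<subseteq> L" unfolding M_def by (rule image_subsetI) (use mmP in simp)
  have idML: "id \<in> M \<rightarrow> L" using MsubL by (simp add: Pi_iff subset_iff)
  define z where "z = Fm (S \<alpha>0) M mm w"
  have zM: "z \<in> Fo M" unfolding z_def using F_fun[OF mmM w(1)] .
  define y where "y = Fm M L id z"
  have yL: "y \<in> Fo L" unfolding y_def using F_fun[OF idML zM] .
  have key: "Fm L (X \<alpha>) (\<pi> \<alpha>) y = Fm (S \<alpha>0) (X \<alpha>) (\<lambda>s. \<theta> s \<alpha>) w" if a: "\<alpha> \<in> K" for \<alpha>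
  proof -
    have piM: "\<pi> \<alpha> \<in> M \<rightarrow> X \<alpha>" using cone1[OF a] MsubL by (simp add: Pi_iff subset_iff)
    have "Fm M (X \<alpha>) (\<pi> \<alpha>) z = Fm L (X \<alpha>) (\<pi> \<alpha>) (Fm M L id z)"
      by (rule F_comp'[OF idML cone1[OF a] _ zM]) simp
    moreover have "Fm (S \<alpha>0) (X \<alpha>) (\<lambda>s. \<theta> s \<alpha>) w = Fm M (X \<alpha>) (\<pi> \<alpha>) (Fm (S \<alpha>0) M mm w)"
      by (rule F_comp'[OF mmM piM _ w(1)]) (use mmP a in simp)
    ultimately show ?thesis unfolding y_def z_def by simp
  qed
  have up: "Fm L (X \<alpha>) (\<pi> \<alpha>) y = t \<alpha>" if a0a: "(\<alpha>0, \<alpha>) \<in> r" for \<alpha>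
  proof -
    have a: "\<alpha> \<in> K" using RK2[OF a0a] .
    define h where "h s = \<theta> s \<alpha>" for s
    have hS: "h \<in> S \<alpha>0 \<rightarrow> S \<alpha>"
    proof (rule funcsetI)
      fix s assume "s \<in> S \<alpha>0"
      then show "h s \<in> S \<alpha>" unfolding h_def using th_up[OF \<open>s \<in> S \<alpha>0\<close> a0a] by simp
    qed
    have idSX: "id \<in> S \<alpha> \<rightarrow> X \<alpha>" using SX[OF a] by (simp add: Pi_iff subset_iff)
    define c where "c = Fm (S \<alpha>0) (S \<alpha>) h w"
    have cS: "c \<in> Fo (S \<alpha>)" unfolding c_def using F_fun[OF hS w(1)] .
    have e1: "Fm (S \<alpha>0) (X \<alpha>) h w = Fm (S \<alpha>) (X \<alpha>) id c"
      unfolding c_def by (rule F_comp'[OF hS idSX _ w(1)]) simp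
    obtain c' where c': "c' \<in> Fo (S \<alpha>)" "t \<alpha> = Fm (S \<alpha>) (X \<alpha>) id c'"
      using Ssupp[OF a] unfolding supp_def by blast
    have RS: "R \<alpha> \<alpha>0 \<in> S \<alpha> \<rightarrow> X \<alpha>0" using od1[OF a0a] SX[OF a] by (auto simp: Pi_iff)
    have injG: "inj_on (Fm (S \<alpha>) (X \<alpha>0) (R \<alpha> \<alpha>0)) (Fo (S \<alpha>))"
      using F_inj[OF RS] E[OF a0r a0a] by simp
    have "Fm (S \<alpha>0) (X \<alpha>0) id w = Fm (S \<alpha>) (X \<alpha>0) (R \<alpha> \<alpha>0) (Fm (S \<alpha>0) (S \<alpha>) h w)"
      by (rule F_comp'[OF hS RS _ w(1)]) (use th_up[OF _ a0a] in \<open>simp add: h_def\<close>)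
    then have g1: "Fm (S \<alpha>) (X \<alpha>0) (R \<alpha> \<alpha>0) c = t \<alpha>0" using w(2) unfolding c_def by simp
    have "Fm (S \<alpha>) (X \<alpha>0) (R \<alpha> \<alpha>0) c' = Fm (X \<alpha>) (X \<alpha>0) (R \<alpha> \<alpha>0) (Fm (S \<alpha>) (X \<alpha>) id c')"
      by (rule F_comp'[OF idSX od1[OF a0a] _ c'(1)]) simp
    then have g2: "Fm (S \<alpha>) (X \<alpha>0) (R \<alpha> \<alpha>0) c' = t \<alpha>0" using c'(2) tR[OF a0a] by simp
    have "c = c'" using injG cS c'(1) g1 g2 by (simp add: inj_on_def)
    then show ?thesis using key[OF a] e1 c'(2) unfolding h_def by simp
  qed
  have all: "Fm L (X \<alpha>) (\<pi> \<alpha>) y = t \<alpha>" if a: "\<alpha> \<in> K" for \<alpha>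
  proof (cases "(\<alpha>0, \<alpha>) \<in> r")
    case True then show ?thesis by (rule up)
  next
    case False
    have aa0: "(\<alpha>, \<alpha>0) \<in> r" using notle[OF a False] .
    have "Fm (X \<alpha>0) (X \<alpha>) (R \<alpha>0 \<alpha>) (Fm L (X \<alpha>0) (\<pi> \<alpha>0) y) = Fm L (X \<alpha>) (\<pi> \<alpha>) y"
      using phi_compat[OF yL aa0] .
    then show ?thesis using up[OF a0r] tR[OF aa0] by simp
  qed
  have "(\<lambda>\<alpha>\<in>K. Fm L (X \<alpha>) (\<pi> \<alpha>) y) = t"
    by (rule extensionalityI[OF _ tE]) (use all in simp_all)
  then show ?thesis using yL by blast
qed

theorem main: "bij_betw (\<lambda>y. \<lambda>\<alpha>\<in>Field r. Fm L (X \<alpha>) (\<pi> \<alpha>) y) (Fo L)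
           (op_threads r (\<lambda>\<alpha>. Fo (X \<alpha>)) (\<lambda>\<alpha> \<beta>. Fm (X \<alpha>) (X \<beta>) (R \<alpha> \<beta>)))"
  unfolding bij_betw_def
proof (intro conjI)
  show "inj_on (\<lambda>y. \<lambda>\<alpha>\<in>Field r. Fm L (X \<alpha>) (\<pi> \<alpha>) y) (Fo L)" using phi_inj .
  show "(\<lambda>y. \<lambda>\<alpha>\<in>Field r. Fm L (X \<alpha>) (\<pi> \<alpha>) y) ` Fo L =
    op_threads r (\<lambda>\<alpha>. Fo (X \<alpha>)) (\<lambda>\<alpha> \<beta>. Fm (X \<alpha>) (X \<beta>) (R \<alpha> \<beta>))"
  proof
    show "(\<lambda>y. \<lambda>\<alpha>\<in>Field r. Fm L (X \<alpha>) (\<pi> \<alpha>) y) ` Fo L \<subseteq>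
      op_threads r (\<lambda>\<alpha>. Fo (X \<alpha>)) (\<lambda>\<alpha> \<beta>. Fm (X \<alpha>) (X \<beta>) (R \<alpha> \<beta>))"
      using phi_thread by blast
    show "op_threads r (\<lambda>\<alpha>. Fo (X \<alpha>)) (\<lambda>\<alpha> \<beta>. Fm (X \<alpha>) (X \<beta>) (R \<alpha> \<beta>)) \<subseteq>
      (\<lambda>y. \<lambda>\<alpha>\<in>Field r. Fm L (X \<alpha>) (\<pi> \<alpha>) y) ` Fo L"
    proof
      fix t assume "t \<in> op_threads r (\<lambda>\<alpha>. Fo (X \<alpha>)) (\<lambda>\<alpha> \<beta>. Fm (X \<alpha>) (X \<beta>) (R \<alpha> \<beta>))"
      from phi_surj[OF this] obtain y where "y \<in> Fo L" "(\<lambda>\<alpha>\<in>K. Fm L (X \<alpha>) (\<pi> \<alpha>) y) = t" by blast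
      then show "t \<in> (\<lambda>y. \<lambda>\<alpha>\<in>Field r. Fm L (X \<alpha>) (\<pi> \<alpha>) y) ` Fo L" by blast
    qed
  qed
qed

end

theorem mainTheorem1:
  fixes Fo :: "'a set \<Rightarrow> 'b set"
    and Fm :: "'a set \<Rightarrow> 'a set \<Rightarrow> ('a \<Rightarrow> 'a) \<Rightarrow> 'b \<Rightarrow> 'b"
    and r :: "'k rel"
    and X :: "'k \<Rightarrow> 'a set"
    and R :: "'k \<Rightarrow> 'k \<Rightarrow> 'a \<Rightarrow> 'a"
    and L :: "'a set"
    and \<pi> :: "'k \<Rightarrow> 'a \<Rightarrow> 'a"
  assumes "set_functor Fo Fm"
    and "finitary Fo Fm"
    and "preserves_mono_pullbacks Fo Fm"
    and "uncountable_regular_ordinal r"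
    and "op_diagram r X R"
    and "is_op_limit r X R L \<pi>"
  shows "bij_betw (\<lambda>y. \<lambda>\<alpha>\<in>Field r. Fm L (X \<alpha>) (\<pi> \<alpha>) y) (Fo L)
           (op_threads r (\<lambda>\<alpha>. Fo (X \<alpha>)) (\<lambda>\<alpha> \<beta>. Fm (X \<alpha>) (X \<beta>) (R \<alpha> \<beta>)))"
  proof -
  interpret setting Fo Fm r X R L \<pi>
    by unfold_locales (rule assms)+
  show ?thesis by (rule main)
qed

end
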